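(* Let $m\ge 1$ be fixed and let $\boldsymbol{\beta}\in\mathbb{R}^m$ be a fixed vector. For each $p$, let $A=A_p\in\mathbb{R}^{m\times p}$ and let $\Psi=\Psi_p\in\mathbb{R}^{p\times p}$ be symmetric positive definite, where as $p$ grows new columns are appended to $A$ and new rows and columns are appended to $\Psi$. Assume: (A.1) there are constants $0<k\le K<\infty$ such that all eigenvalues of $\Psi_p$ lie in $[k,K]$ for all $p$; (A.2) the limit $\lim_{p\to\infty}\frac{1}{p}A_pA_p^T\in\mathbb{R}^{m\times m}$ exists and has full rank $m$. Define $\boldsymbol{\gamma}_0=\boldsymbol{\gamma}_0(p)=(A_p^TA_p+\Psi_p)^{-1}A_p^T\boldsymbol{\beta}\in\mathbb{R}^p$. Then $\|\boldsymbol{\gamma}_0\|_1=\mathcal{O}(1)$ as $p\to\infty$.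
   Context: This arises from the joint latent variable model $y=\boldsymbol{\beta}^T\mathbf{f}+\epsilon$, $\mathbf{x}=A^T\mathbf{f}+\mathbf{e}$, with latent $\mathbf{f}\in\mathbb{R}^m$ (mean zero, identity covariance), $\epsilon$ mean zero with variance $\sigma^2$, $\mathbf{e}$ mean zero with covariance $\Psi$, all mutually uncorrelated; then $\boldsymbol{\gamma}_0^T\mathbf{x}$ is the best linear predictor of $y$ from $\mathbf{x}\in\mathbb{R}^p$. $\|\cdot\|_1$ denotes the $\ell_1$-norm. *)

theory Defs
  imports "Jordan_Normal_Form.Char_Poly" "Jordan_Normal_Form.DL_Rank"
    "Jordan_Normal_Form.Gauss_Jordan_Elimination" "HOL-Library.Landau_Symbols"
begin

text \<open>The growing matrices are encoded by infinite arrays: A_p is the m x p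
  leading block of A, and Psi_p is the p x p leading block of Psi. Appending
  columns (resp. rows and columns) as p grows is thus built in.\<close>

definition A_p :: "nat \<Rightarrow> (nat \<Rightarrow> nat \<Rightarrow> real) \<Rightarrow> nat \<Rightarrow> real mat" where
  "A_p m A p = mat m p (\<lambda>(i, j). A i j)"

definition Psi_p :: "(nat \<Rightarrow> nat \<Rightarrow> real) \<Rightarrow> nat \<Rightarrow> real mat" where
  "Psi_p Psi p = mat p p (\<lambda>(i, j). Psi i j)"

definition pos_def_mat :: "real mat \<Rightarrow> bool" where
  "pos_def_mat M \<longleftrightarrow> M \<in> carrier_mat (dim_row M) (dim_row M) \<and> transpose_mat M = M \<and>
     (\<forall>v \<in> carrier_vec (dim_row M). v \<noteq> 0\<^sub>v (dim_row M) \<longrightarrow> v \<bullet> (M *\<^sub>v v) > 0)"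

definition gamma0 :: "real mat \<Rightarrow> real mat \<Rightarrow> real vec \<Rightarrow> real vec" where
  "gamma0 A Psi \<beta> = the (mat_inverse (transpose_mat A * A + Psi)) *\<^sub>v (transpose_mat A *\<^sub>v \<beta>)"

definition l1_norm_vec :: "real vec \<Rightarrow> real" where
  "l1_norm_vec v = (\<Sum>i<dim_vec v. \<bar>v $ i\<bar>)"

end

theory Submission
  imports Defs "HOL-Analysis.Function_Topology"
begin

definition qf :: "(nat \<Rightarrow> nat \<Rightarrow> real) \<Rightarrow> nat \<Rightarrow> (nat \<Rightarrow> real) \<Rightarrow> real" where
  "qf S n x = (\<Sum>i<n. \<Sum>j<n. x i * S i j * x j)"
definition nsq :: "nat \<Rightarrow> (nat \<Rightarrow> real) \<Rightarrow> real" where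
  "nsq n x = (\<Sum>i<n. (x i)^2)"

lemma cont_coord: "continuous_on S (\<lambda>x::nat\<Rightarrow>real. x i)"
  by (rule continuous_on_subset[OF continuous_on_product_coordinates]) simp

lemma cont_qf: "continuous_on S (qf M n)"
  unfolding qf_def by (intro continuous_intros cont_coord)
lemma cont_nsq: "continuous_on S (nsq n)"
  unfolding nsq_def by (intro continuous_intros cont_coord)

definition Cub :: "nat \<Rightarrow> (nat \<Rightarrow> real) set" where
  "Cub n = PiE UNIV (\<lambda>i. if i < n then {-1..1} else {0})"

lemma compact_Cub: "compact (Cub n)"
proof -
  have "compactin (product_topology (\<lambda>i. euclidean) UNIV) (Cub n)"
    unfolding Cub_def compactin_PiE by auto
  then show ?thesis by (simp add: euclidean_product_topology)
qed

lemma min_exists: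
  assumes "n \<ge> 1"
  shows "\<exists>x0. nsq n x0 = 1 \<and> (\<forall>x. nsq n x = 1 \<longrightarrow> qf S n x0 \<le> qf S n x)"
proof -
  let ?Sph = "Cub n \<inter> {x. nsq n x = 1}"
  have cl: "closed {x. nsq n x = 1}"
    by (rule closed_Collect_eq) (auto intro: cont_nsq continuous_on_const)
  have cp: "compact ?Sph" using compact_Cub cl by (rule compact_Int_closed)
  have e1: "nsq n (\<lambda>i. if i = 0 then 1 else 0) = 1"
  proof -
    have "nsq n (\<lambda>i. if i = 0 then 1 else 0) = (\<Sum>i<n. if i = 0 then 1 else 0)"
      unfolding nsq_def by (intro sum.cong) auto
    also have "\<dots> = 1" using assms by (simp add: sum.delta)
    finally show ?thesis .
  qed
  have "(\<lambda>i. if i = 0 then 1 else 0) \<in> ?Sph"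
    using assms e1 by (auto simp: Cub_def)
  then have ne: "?Sph \<noteq> {}" by blast
  obtain x0 where x0: "x0 \<in> ?Sph" "\<And>y. y \<in> ?Sph \<Longrightarrow> qf S n x0 \<le> qf S n y"
    using continuous_attains_inf[OF cp ne cont_qf] by blast
  show ?thesis
  proof (intro exI conjI allI impI)
    show "nsq n x0 = 1" using x0 by simp
    fix x assume x: "nsq n x = 1"
    define y where "y = (\<lambda>i. if i < n then x i else 0)"
    have qy: "qf S n y = qf S n x" by (simp add: qf_def y_def)
    have ny: "nsq n y = 1" using x by (simp add: nsq_def y_def)
    have "\<bar>y i\<bar> \<le> 1" if "i < n" for i
    proof -
      have "(y i)^2 \<le> nsq n y" unfolding nsq_def
        by (rule member_le_sum) (use that in auto)
      then show ?thesis using ny by (simp add: abs_square_le_1)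
    qed
    then have "y \<in> ?Sph" using ny by (auto simp: Cub_def y_def abs_le_iff)
    then show "qf S n x0 \<le> qf S n x" using x0(2) qy by metis
  qed
qed

definition bf :: "(nat \<Rightarrow> nat \<Rightarrow> real) \<Rightarrow> nat \<Rightarrow> (nat \<Rightarrow> real) \<Rightarrow> (nat \<Rightarrow> real) \<Rightarrow> real" where
  "bf S n x y = (\<Sum>i<n. \<Sum>j<n. x i * S i j * y j)"
definition dot :: "nat \<Rightarrow> (nat \<Rightarrow> real) \<Rightarrow> (nat \<Rightarrow> real) \<Rightarrow> real" where
  "dot n x y = (\<Sum>i<n. x i * y i)"

lemma qf_bf: "qf S n x = bf S n x x" by (simp add: qf_def bf_def)
lemma nsq_dot: "nsq n x = dot n x x" by (simp add: nsq_def dot_def power2_eq_square)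

lemma qf_scale: "qf S n (\<lambda>i. c * x i) = c^2 * qf S n x"
  unfolding qf_def sum_distrib_left by (intro sum.cong refl) (simp add: power2_eq_square algebra_simps)
lemma nsq_scale: "nsq n (\<lambda>i. c * x i) = c^2 * nsq n x"
  unfolding nsq_def sum_distrib_left by (intro sum.cong refl) (simp add: power2_eq_square algebra_simps)

lemma nsq_nonneg: "0 \<le> nsq n x" unfolding nsq_def by (intro sum_nonneg) auto

lemma nsq_zero: "nsq n x = 0 \<Longrightarrow> i < n \<Longrightarrow> x i = 0"
  unfolding nsq_def by (subst (asm) sum_nonneg_eq_0_iff) auto

lemma min_exists2:
  assumes "n \<ge> 1"
  shows "\<exists>x0. nsq n x0 = 1 \<and> (\<forall>x. qf S n x0 * nsq n x \<le> qf S n x)"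
proof -
  obtain x0 where x0: "nsq n x0 = 1" "\<And>x. nsq n x = 1 \<Longrightarrow> qf S n x0 \<le> qf S n x"
    using min_exists[OF assms] by blast
  show ?thesis
  proof (intro exI conjI allI)
    show "nsq n x0 = 1" by fact
    fix x
    show "qf S n x0 * nsq n x \<le> qf S n x"
    proof (cases "nsq n x = 0")
      case True
      then have "qf S n x = 0" unfolding qf_def using nsq_zero[OF True] by simp
      then show ?thesis using True by simp
    next
      case False
      define t where "t = nsq n x"
      have t: "t > 0" using False nsq_nonneg[of n x] by (simp add: t_def)
      define c where "c = 1 / sqrt t"
      have c2: "c^2 = 1 / t" using t by (simp add: c_def power_divide)
      have "nsq n (\<lambda>i. c * x i) = 1" using t by (simp add: nsq_scale c2 t_def)
      then have "qf S n x0 \<le> c^2 * qf S n x" using x0(2) qf_scale by metis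
      then have "qf S n x0 * t \<le> qf S n x" using t by (simp add: c2 field_simps)
      then show ?thesis by (simp add: t_def)
    qed
  qed
qed

lemma bf_sym:
  assumes "\<And>i j. i < n \<Longrightarrow> j < n \<Longrightarrow> S i j = S j i"
  shows "bf S n y x = bf S n x y"
  unfolding bf_def by (subst sum.swap) (intro sum.cong refl, simp add: assms mult.commute)

lemma qf_add:
  assumes "\<And>i j. i < n \<Longrightarrow> j < n \<Longrightarrow> S i j = S j i"
  shows "qf S n (\<lambda>i. x i + t * y i) = qf S n x + t * (2 * bf S n x y) + t^2 * qf S n y"
proof -
  have "qf S n (\<lambda>i. x i + t * y i) = qf S n x + t * (bf S n x y + bf S n y x) + t^2 * qf S n y"
    unfolding qf_def bf_def sum_distrib_left sum.distrib[symmetric]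
    by (intro sum.cong refl) (simp add: algebra_simps power2_eq_square)
  then show ?thesis using bf_sym[of n S y x, OF assms] by simp
qed

lemma nsq_add: "nsq n (\<lambda>i. x i + t * y i) = nsq n x + t * (2 * dot n x y) + t^2 * nsq n y"
  unfolding nsq_def dot_def sum_distrib_left sum.distrib[symmetric]
  by (intro sum.cong refl) (simp add: algebra_simps power2_eq_square)

lemma quad_disc:
  fixes a b c :: real
  assumes "\<And>t. 0 \<le> a + t * b + t^2 * c" and "0 \<le> c"
  shows "b^2 \<le> 4 * a * c"
proof (cases "c = 0")
  case True
  have "b = 0"
  proof (rule ccontr)
    assume "b \<noteq> 0"
    have "0 \<le> a + (-(\<bar>a\<bar> + 1) / b) * b" using assms(1)[of "-(\<bar>a\<bar> + 1) / b"] True by simp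
    also have "\<dots> = a - (\<bar>a\<bar> + 1)" using \<open>b \<noteq> 0\<close> by simp
    finally show False by simp
  qed
  then show ?thesis using True by simp
next
  case False
  then have c: "c > 0" using assms(2) by simp
  have "0 \<le> a + (-b/(2*c)) * b + (-b/(2*c))^2 * c" by (rule assms(1))
  also have "\<dots> = a - b^2 / (4 * c)" using c by (simp add: field_simps power2_eq_square)
  finally have "b^2 / (4*c) \<le> a" by simp
  then show ?thesis using c by (simp add: field_simps)
qed

lemma psd_cs:
  assumes sym: "\<And>i j. i < n \<Longrightarrow> j < n \<Longrightarrow> S i j = S j i"
    and psd: "\<And>x. 0 \<le> qf S n x"
  shows "(bf S n x y)^2 \<le> qf S n x * qf S n y"
proof -
  have "(2 * bf S n x y)^2 \<le> 4 * qf S n x * qf S n y"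
  proof (rule quad_disc)
    fix t
    show "0 \<le> qf S n x + t * (2 * bf S n x y) + t^2 * qf S n y"
      using psd[of "\<lambda>i. x i + t * y i"] qf_add[of n S x t y, OF sym] by simp
  qed (rule psd)
  then show ?thesis by (simp add: power2_eq_square)
qed

lemma min_eigen:
  assumes sym: "\<And>i j. i < n \<Longrightarrow> j < n \<Longrightarrow> S i j = S j i"
    and x0: "nsq n x0 = 1" and mn: "\<And>x. qf S n x0 * nsq n x \<le> qf S n x"
  shows "bf S n y x0 = qf S n x0 * dot n y x0"
proof -
  let ?mu = "qf S n x0"
  have "(2 * bf S n x0 y - ?mu * (2 * dot n x0 y))^2 \<le> 4 * 0 * (qf S n y - ?mu * nsq n y)"
  proof (rule quad_disc)
    fix t
    have "?mu * nsq n (\<lambda>i. x0 i + t * y i) \<le> qf S n (\<lambda>i. x0 i + t * y i)" by (rule mn)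
    then show "0 \<le> 0 + t * (2 * bf S n x0 y - ?mu * (2 * dot n x0 y)) + t^2 * (qf S n y - ?mu * nsq n y)"
      using qf_add[of n S x0 t y, OF sym] nsq_add[of n x0 t y] x0 by (simp add: algebra_simps)
  next
    show "0 \<le> qf S n y - ?mu * nsq n y" using mn[of y] by simp
  qed
  then have "bf S n x0 y = ?mu * dot n x0 y" by simp
  then show ?thesis using bf_sym[of n S x0 y, OF sym] by (simp add: dot_def mult.commute)
qed


lemma eig_min:
  assumes sym: "\<And>i j. i < n \<Longrightarrow> j < n \<Longrightarrow> S i j = S j i" and n: "n \<ge> 1"
  shows "\<exists>x0. nsq n x0 = 1 \<and> (\<forall>i<n. (\<Sum>j<n. S i j * x0 j) = qf S n x0 * x0 i)
           \<and> (\<forall>x. qf S n x0 * nsq n x \<le> qf S n x)"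
proof -
  obtain x0 where x0: "nsq n x0 = 1" "\<And>x. qf S n x0 * nsq n x \<le> qf S n x"
    using min_exists2[OF n] by blast
  have "(\<Sum>j<n. S i j * x0 j) = qf S n x0 * x0 i" if i: "i < n" for i
  proof -
    have "bf S n (\<lambda>a. if a = i then 1 else 0) x0 = (\<Sum>a<n. if a = i then (\<Sum>j<n. S a j * x0 j) else 0)"
      unfolding bf_def by (intro sum.cong) auto
    also have "\<dots> = (\<Sum>j<n. S i j * x0 j)" using i by (simp add: sum.delta)
    finally have "bf S n (\<lambda>a. if a = i then 1 else 0) x0 = (\<Sum>j<n. S i j * x0 j)" .
    moreover have "dot n (\<lambda>a. if a = i then 1 else 0) x0 = x0 i"
    proof -
      have "dot n (\<lambda>a. if a = i then 1 else 0) x0 = (\<Sum>a<n. if a = i then x0 a else 0)"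
        unfolding dot_def by (intro sum.cong) auto
      then show ?thesis using i by (simp add: sum.delta)
    qed
    ultimately show ?thesis using min_eigen[OF sym x0, of "\<lambda>a. if a = i then 1 else 0"] by simp
  qed
  then show ?thesis using x0 by blast
qed

lemma vec_ne0: "nsq n x0 = 1 \<Longrightarrow> vec n x0 \<noteq> 0\<^sub>v n"
proof
  assume "nsq n x0 = 1" "vec n x0 = 0\<^sub>v n"
  then have "\<forall>i<n. x0 i = 0" by (metis index_vec index_zero_vec(1))
  then have "nsq n x0 = 0" by (simp add: nsq_def)
  then show False using \<open>nsq n x0 = 1\<close> by simp
qed

lemma mat_vec_eq:
  "mat n n (\<lambda>(i, j). S i j) *\<^sub>v vec n x = vec n (\<lambda>i. \<Sum>j<n. S i j * x j)"
  by (rule eq_vecI) (auto simp: scalar_prod_def row_def atLeast0LessThan)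

lemma psi_sym:
  assumes "\<forall>p. pos_def_mat (Psi_p Psi p)"
  shows "Psi i j = Psi j i"
proof -
  let ?p = "Suc (max i j)"
  have "transpose_mat (Psi_p Psi ?p) = Psi_p Psi ?p" using assms unfolding pos_def_mat_def by blast
  then have "transpose_mat (Psi_p Psi ?p) $$ (i, j) = Psi_p Psi ?p $$ (i, j)" by simp
  then show ?thesis unfolding Psi_p_def by (simp add: less_Suc_eq_le)
qed

lemma psi_bounds:
  assumes pd: "\<forall>p. pos_def_mat (Psi_p Psi p)"
    and ev: "\<forall>p e. eigenvalue (Psi_p Psi p) e \<longrightarrow> k \<le> e \<and> e \<le> K"
    and k: "0 \<le> k"
  shows "k * nsq p x \<le> qf Psi p x" "qf Psi p x \<le> K * nsq p x"
proof -
  have sym: "\<And>i j. Psi i j = Psi j i" using psi_sym[OF pd] by blast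
  have "k * nsq p x \<le> qf Psi p x \<and> qf Psi p x \<le> K * nsq p x"
  proof (cases "p = 0")
    case True then show ?thesis by (simp add: nsq_def qf_def)
  next
    case False
    then have p: "p \<ge> 1" by simp
    obtain x0 where x0: "nsq p x0 = 1" "\<forall>i<p. (\<Sum>j<p. Psi i j * x0 j) = qf Psi p x0 * x0 i"
        "\<forall>x. qf Psi p x0 * nsq p x \<le> qf Psi p x"
      using eig_min[of p Psi, OF sym p] by blast
    have "Psi_p Psi p *\<^sub>v vec p x0 = qf Psi p x0 \<cdot>\<^sub>v vec p x0"
      unfolding Psi_p_def mat_vec_eq using x0(2) by (auto intro!: eq_vecI)
    then have "eigenvalue (Psi_p Psi p) (qf Psi p x0)"
      unfolding eigenvalue_def eigenvector_def using vec_ne0[OF x0(1)]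
      by (intro exI[of _ "vec p x0"]) (simp add: Psi_p_def)
    then have lo: "k \<le> qf Psi p x0" using ev by blast
    let ?S = "\<lambda>i j. - Psi i j"
    obtain y0 where y0: "nsq p y0 = 1" "\<forall>i<p. (\<Sum>j<p. ?S i j * y0 j) = qf ?S p y0 * y0 i"
        "\<forall>x. qf ?S p y0 * nsq p x \<le> qf ?S p x"
      using eig_min[of p ?S, OF _ p] sym by auto
    have qS: "\<And>x. qf ?S p x = - qf Psi p x" by (simp add: qf_def sum_negf)
    have "Psi_p Psi p *\<^sub>v vec p y0 = qf Psi p y0 \<cdot>\<^sub>v vec p y0"
      unfolding Psi_p_def mat_vec_eq using y0(2) qS by (auto intro!: eq_vecI simp: sum_negf)
    then have "eigenvalue (Psi_p Psi p) (qf Psi p y0)"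
      unfolding eigenvalue_def eigenvector_def using vec_ne0[OF y0(1)]
      by (intro exI[of _ "vec p y0"]) (simp add: Psi_p_def)
    then have hi: "qf Psi p y0 \<le> K" using ev by blast
    have "k * nsq p x \<le> qf Psi p x0 * nsq p x" using lo nsq_nonneg by (intro mult_right_mono) auto
    also have "\<dots> \<le> qf Psi p x" using x0(3) by blast
    finally have 1: "k * nsq p x \<le> qf Psi p x" .
    have "qf Psi p x \<le> qf Psi p y0 * nsq p x" using y0(3)[rule_format, of x] qS by simp
    also have "\<dots> \<le> K * nsq p x" using hi nsq_nonneg by (intro mult_right_mono) auto
    finally show ?thesis using 1 by simp
  qed
  then show "k * nsq p x \<le> qf Psi p x" "qf Psi p x \<le> K * nsq p x" by auto
qed


definition DD :: "(nat \<Rightarrow> nat \<Rightarrow> real) \<Rightarrow> nat \<Rightarrow> nat \<Rightarrow> nat \<Rightarrow> real" where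
  "DD A p l l' = (\<Sum>i<p. A l i * A l' i)"

lemma AAt_entry:
  assumes "i < m" "j < m"
  shows "(A_p m A p * transpose_mat (A_p m A p)) $$ (i, j) = DD A p i j"
  using assms by (simp add: A_p_def DD_def scalar_prod_def row_def col_def atLeast0LessThan)

lemma qf_DD: "qf (DD A p) m x = nsq p (\<lambda>i. \<Sum>l<m. A l i * x l)"
proof -
  have "qf (DD A p) m x = (\<Sum>l<m. \<Sum>l'<m. \<Sum>i<p. (A l i * x l) * (A l' i * x l'))"
    unfolding qf_def DD_def sum_distrib_left sum_distrib_right
    by (intro sum.cong refl) (simp add: algebra_simps)
  also have "\<dots> = (\<Sum>l<m. \<Sum>i<p. \<Sum>l'<m. (A l i * x l) * (A l' i * x l'))"
    by (rule sum.cong[OF refl]) (rule sum.swap)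
  also have "\<dots> = (\<Sum>i<p. \<Sum>l<m. \<Sum>l'<m. (A l i * x l) * (A l' i * x l'))"
    by (rule sum.swap)
  also have "\<dots> = nsq p (\<lambda>i. \<Sum>l<m. A l i * x l)"
    unfolding nsq_def power2_eq_square sum_product by simp
  finally show ?thesis .
qed

lemma qf_nonneg_DD: "0 \<le> qf (DD A p) m x"
  unfolding qf_DD by (rule nsq_nonneg)

lemma abs_sum_sq: "(\<Sum>i<n. \<bar>x i\<bar>)^2 \<le> real n * nsq n x"
proof -
  have "(2 * dot n (\<lambda>_. 1) (\<lambda>i. \<bar>x i\<bar>))^2 \<le> 4 * nsq n (\<lambda>_. 1) * nsq n (\<lambda>i. \<bar>x i\<bar>)"
  proof (rule quad_disc)
    fix t
    show "0 \<le> nsq n (\<lambda>_. 1) + t * (2 * dot n (\<lambda>_. 1) (\<lambda>i. \<bar>x i\<bar>)) + t^2 * nsq n (\<lambda>i. \<bar>x i\<bar>)"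
      using nsq_add[of n "\<lambda>_. 1" t "\<lambda>i. \<bar>x i\<bar>"] nsq_nonneg by metis
  qed (rule nsq_nonneg)
  then show ?thesis by (simp add: dot_def nsq_def power2_eq_square)
qed

lemma dot_cs: "(dot n x y)^2 \<le> nsq n x * nsq n y"
proof -
  have "(2 * dot n x y)^2 \<le> 4 * nsq n x * nsq n y"
  proof (rule quad_disc)
    fix t
    show "0 \<le> nsq n x + t * (2 * dot n x y) + t^2 * nsq n y"
      using nsq_add[of n x t y] nsq_nonneg by metis
  qed (rule nsq_nonneg)
  then show ?thesis by (simp add: power2_eq_square)
qed

lemma qf_perturb:
  assumes "\<And>i j. i < n \<Longrightarrow> j < n \<Longrightarrow> \<bar>S1 i j - S2 i j\<bar> \<le> e" and e: "0 \<le> e"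
  shows "qf S2 n x - e * real n * nsq n x \<le> qf S1 n x"
proof -
  have "\<bar>qf S1 n x - qf S2 n x\<bar> = \<bar>\<Sum>i<n. \<Sum>j<n. x i * (S1 i j - S2 i j) * x j\<bar>"
    unfolding qf_def sum_subtractf[symmetric] by (simp add: algebra_simps)
  also have "\<dots> \<le> (\<Sum>i<n. \<Sum>j<n. \<bar>x i * (S1 i j - S2 i j) * x j\<bar>)"
    by (rule order_trans[OF sum_abs]) (intro sum_mono sum_abs)
  also have "\<dots> \<le> (\<Sum>i<n. \<Sum>j<n. \<bar>x i\<bar> * e * \<bar>x j\<bar>)"
  proof (intro sum_mono)
    fix i j assume "i \<in> {..<n}" "j \<in> {..<n}"
    then have "\<bar>S1 i j - S2 i j\<bar> \<le> e" using assms(1) by auto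
    then show "\<bar>x i * (S1 i j - S2 i j) * x j\<bar> \<le> \<bar>x i\<bar> * e * \<bar>x j\<bar>"
      unfolding abs_mult by (intro mult_right_mono mult_left_mono) auto
  qed
  also have "\<dots> = e * (\<Sum>i<n. \<bar>x i\<bar>)^2"
    by (simp add: power2_eq_square sum_product sum_distrib_left algebra_simps)
  also have "\<dots> \<le> e * (real n * nsq n x)"
    using e abs_sum_sq by (rule mult_left_mono[rotated])
  finally show ?thesis by (simp add: algebra_simps)
qed


lemma qf_scale_mat: "qf (\<lambda>i j. c * S i j) n x = c * qf S n x"
  unfolding qf_def sum_distrib_left by (intro sum.cong refl) (simp add: algebra_simps)

lemma L_lower:
  assumes m: "m \<ge> 1" and L: "L \<in> carrier_mat m m" "vec_space.rank m L = m"
   and lim: "\<forall>i<m. \<forall>j<m. (\<lambda>p. (1 / real p) * (A_p m A p * transpose_mat (A_p m A p)) $$ (i, j)) \<longlonglongrightarrow> L $$ (i, j)"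
  shows "\<exists>c>0. eventually (\<lambda>p. \<forall>x. c * real p * nsq m x \<le> qf (DD A p) m x) sequentially"
proof -
  define Lf where "Lf i j = L $$ (i,j)" for i j
  have lim': "(\<lambda>p. (1/real p) * DD A p i j) \<longlonglongrightarrow> Lf i j" if "i < m" "j < m" for i j
  proof -
    have "(\<lambda>p. (1 / real p) * (A_p m A p * transpose_mat (A_p m A p)) $$ (i, j)) \<longlonglongrightarrow> L $$ (i, j)"
      using lim that by blast
    then show ?thesis unfolding AAt_entry[OF that] Lf_def .
  qed
  have sym: "Lf i j = Lf j i" if "i < m" "j < m" for i j
  proof -
    have "DD A p i j = DD A p j i" for p by (simp add: DD_def mult.commute)
    then have "(\<lambda>p. (1/real p) * DD A p i j) \<longlonglongrightarrow> Lf j i" using lim'[OF that(2,1)] by simp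
    then show ?thesis using lim'[OF that] LIMSEQ_unique by blast
  qed
  have psd: "0 \<le> qf Lf m x" for x
  proof -
    have "(\<lambda>p. qf (\<lambda>i j. (1/real p) * DD A p i j) m x) \<longlonglongrightarrow> qf Lf m x"
      unfolding qf_def by (intro tendsto_intros lim') auto
    moreover have "0 \<le> qf (\<lambda>i j. (1/real p) * DD A p i j) m x" for p
      unfolding qf_scale_mat using qf_nonneg_DD by simp
    ultimately show ?thesis by (intro LIMSEQ_le_const) auto
  qed
  obtain x0 where x0: "nsq m x0 = 1" "\<forall>i<m. (\<Sum>j<m. Lf i j * x0 j) = qf Lf m x0 * x0 i"
      "\<forall>x. qf Lf m x0 * nsq m x \<le> qf Lf m x"
    using eig_min[of m Lf, OF sym m] by blast
  define mu where "mu = qf Lf m x0"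
  have mu0: "mu \<noteq> 0"
  proof
    assume "mu = 0"
    have "L *\<^sub>v vec m x0 = vec m (\<lambda>i. \<Sum>j<m. Lf i j * x0 j)"
      using L(1) by (intro eq_vecI) (auto simp: scalar_prod_def row_def atLeast0LessThan Lf_def)
    also have "\<dots> = 0\<^sub>v m" using x0(2) \<open>mu = 0\<close> mu_def by (intro eq_vecI) auto
    finally have "det L = 0" using det_0_iff_vec_prod_zero[OF L(1)] vec_ne0[OF x0(1)]
      by (meson vec_carrier)
    then show False using vec_space.det_rank_iff[OF L(1)] L(2) by simp
  qed
  have mu: "mu > 0" using mu0 psd[of x0] mu_def by simp
  define e where "e = mu / (2 * real m)"
  have e: "e > 0" using mu m by (simp add: e_def)
  have ev1: "eventually (\<lambda>p. \<forall>i\<in>{..<m}. \<forall>j\<in>{..<m}. dist ((1/real p) * DD A p i j) (Lf i j) < e) sequentially"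
    by (intro eventually_ball_finite ballI finite_lessThan tendstoD[OF lim'] e) auto
  have "eventually (\<lambda>p. \<forall>x. mu / 2 * real p * nsq m x \<le> qf (DD A p) m x) sequentially"
    using ev1 eventually_ge_at_top[of 1]
  proof eventually_elim
    case (elim p)
    show ?case
    proof
      fix x
      have "qf Lf m x - e * real m * nsq m x \<le> qf (\<lambda>i j. (1/real p) * DD A p i j) m x"
        by (rule qf_perturb) (use elim e in \<open>fastforce simp: dist_real_def abs_minus_commute less_imp_le\<close>)+
      moreover have "mu * nsq m x \<le> qf Lf m x" using x0(3) mu_def by blast
      moreover have "e * real m = mu / 2" using m by (simp add: e_def)
      ultimately have "mu / 2 * nsq m x \<le> (1/real p) * qf (DD A p) m x"
        unfolding qf_scale_mat by (simp add: algebra_simps)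
      then show "mu / 2 * real p * nsq m x \<le> qf (DD A p) m x"
        using elim by (simp add: field_simps)
    qed
  qed
  then show ?thesis using mu by (intro exI[of _ "mu/2"]) auto
qed


lemma numerics:
  fixes U Q a b G l1 k K c P :: real
  assumes U1: "U^2 \<le> K*Q*U" and U0: "0 \<le> U" and Q0: "0 \<le> Q" and Qab: "Q^2 \<le> a*b"
    and cPa: "c*P*a \<le> U" and kG: "k*G \<le> Q" and QGU: "Q^2 \<le> G*U" and l1: "l1^2 \<le> P*G"
    and k: "0<k" and c: "0<c" and P: "0<P" and K: "0\<le>K" and a: "0\<le>a" and b: "0\<le>b" and G: "0\<le>G"
  shows "l1 \<le> sqrt (K^2*b/(c*k^2))"
proof -
  have h1: "U \<le> K*Q"
  proof (cases "U = 0")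
    case True then show ?thesis using K Q0 by simp
  next
    case False
    then have "U > 0" using U0 by simp
    then show ?thesis using U1 by (simp add: power2_eq_square)
  qed
  have h2: "U^2 \<le> K^2*a*b"
  proof -
    have "U^2 \<le> (K*Q)^2" using h1 U0 by (rule power_mono)
    also have "\<dots> = K^2 * Q^2" by (simp add: power_mult_distrib)
    also have "\<dots> \<le> K^2 * (a*b)" using Qab by (intro mult_left_mono) auto
    finally show ?thesis by simp
  qed
  have h3: "a \<le> U/(c*P)" using cPa c P by (simp add: field_simps)
  have h4: "U^2 \<le> K^2*b*(U/(c*P))"
  proof -
    have "K^2*a*b = K^2*b*a" by simp
    also have "\<dots> \<le> K^2*b*(U/(c*P))" using h3 b by (intro mult_left_mono) auto
    finally show ?thesis using h2 by simp
  qed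
  have h5: "U \<le> K^2*b/(c*P)"
  proof (cases "U = 0")
    case True then show ?thesis using b c P by simp
  next
    case False
    then have "U > 0" using U0 by simp
    have "U * U \<le> (K^2*b/(c*P)) * U" using h4 by (simp add: power2_eq_square)
    then show ?thesis using \<open>U > 0\<close> by (rule mult_right_le_imp_le)
  qed
  have h6: "G \<le> U/k^2"
  proof (cases "G = 0")
    case True then show ?thesis using U0 by simp
  next
    case False
    then have Gp: "G > 0" using G by simp
    have "(k*G)^2 \<le> Q^2" using kG k G by (intro power_mono) auto
    then have "k^2*G*G \<le> G*U" using QGU by (simp add: power2_eq_square algebra_simps)
    then have "k^2*G \<le> U" using Gp by (simp add: mult.commute)
    then show ?thesis using k by (simp add: field_simps)
  qed
  have "l1^2 \<le> P*G" by fact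
  also have "\<dots> \<le> P*(U/k^2)" using h6 P by (intro mult_left_mono) auto
  also have "\<dots> \<le> P*(K^2*b/(c*P)/k^2)" using h5 P k by (intro mult_left_mono divide_right_mono) auto
  also have "\<dots> = K^2*b/(c*k^2)" using P by (simp add: field_simps)
  finally show ?thesis by (rule real_le_rsqrt)
qed

lemma gamma_key:
  fixes A Psi :: "nat \<Rightarrow> nat \<Rightarrow> real" and \<beta> :: "real vec"
  assumes pd: "pos_def_mat (Psi_p Psi p)" and b: "\<beta> \<in> carrier_vec m"
  defines "g \<equiv> gamma0 (A_p m A p) (Psi_p Psi p) \<beta>"
  shows "dim_vec g = p"
    "\<And>i. i < p \<Longrightarrow> (\<Sum>j<p. Psi i j * g $ j) = (\<Sum>l<m. A l i * (\<beta> $ l - (\<Sum>j<p. A l j * g $ j)))"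
proof -
  define Ap where "Ap = A_p m A p"
  define Pp where "Pp = Psi_p Psi p"
  have Ap: "Ap \<in> carrier_mat m p" by (simp add: Ap_def A_p_def)
  have Pp: "Pp \<in> carrier_mat p p" by (simp add: Pp_def Psi_p_def)
  have ApT: "transpose_mat Ap \<in> carrier_mat p m" using Ap by simp
  define M where "M = transpose_mat Ap * Ap + Pp"
  have M: "M \<in> carrier_mat p p" using Ap Pp by (simp add: M_def)
  have pdP: "\<And>v. v \<in> carrier_vec p \<Longrightarrow> v \<noteq> 0\<^sub>v p \<Longrightarrow> v \<bullet> (Pp *\<^sub>v v) > 0"
    using pd unfolding pos_def_mat_def Pp_def Psi_p_def by auto
  have "det M \<noteq> 0"
  proof
    assume "det M = 0"
    then obtain v where v: "v \<in> carrier_vec p" "v \<noteq> 0\<^sub>v p" "M *\<^sub>v v = 0\<^sub>v p"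
      using det_0_iff_vec_prod_zero[OF M] by blast
    have Av: "Ap *\<^sub>v v \<in> carrier_vec m" using Ap v by simp
    have "M *\<^sub>v v = transpose_mat Ap *\<^sub>v (Ap *\<^sub>v v) + Pp *\<^sub>v v"
      unfolding M_def using Ap Pp v by (simp add: add_mult_distrib_mat_vec[of _ p p])
    then have "v \<bullet> (M *\<^sub>v v) = v \<bullet> (transpose_mat Ap *\<^sub>v (Ap *\<^sub>v v)) + v \<bullet> (Pp *\<^sub>v v)"
      using v(1) Ap Pp by (simp add: scalar_prod_add_distrib[of _ p])
    moreover have "v \<bullet> (M *\<^sub>v v) = 0" using v(1,3) by simp
    ultimately have "0 = v \<bullet> (transpose_mat Ap *\<^sub>v (Ap *\<^sub>v v)) + v \<bullet> (Pp *\<^sub>v v)" by simp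
    moreover have "v \<bullet> (transpose_mat Ap *\<^sub>v (Ap *\<^sub>v v)) = (Ap *\<^sub>v v) \<bullet> (Ap *\<^sub>v v)"
      using transpose_vec_mult_scalar[OF Ap v(1) Av] comm_scalar_prod[of v p "transpose_mat Ap *\<^sub>v (Ap *\<^sub>v v)"]
        v Ap by simp
    moreover have "(Ap *\<^sub>v v) \<bullet> (Ap *\<^sub>v v) \<ge> 0"
      unfolding scalar_prod_def by (intro sum_nonneg) auto
    ultimately show False using pdP[OF v(1,2)] by linarith
  qed
  then have unit: "M \<in> Units (ring_mat TYPE(real) p undefined)" by (rule det_non_zero_imp_unit[OF M])
  obtain B where B: "mat_inverse M = Some B"
  proof (cases "mat_inverse M")
    case None
    then have "M \<notin> Units (ring_mat TYPE(real) p undefined)" by (rule mat_inverse(1)[OF M])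
    then show ?thesis using unit by blast
  qed
  have MB: "M * B = 1\<^sub>m p" "B \<in> carrier_mat p p" using mat_inverse(2)[OF M B] by auto
  have gB: "g = B *\<^sub>v (transpose_mat Ap *\<^sub>v \<beta>)"
  proof -
    have "mat_inverse (transpose_mat Ap * Ap + Pp) = Some B" using B by (simp add: M_def)
    then show ?thesis unfolding g_def gamma0_def Ap_def Pp_def by simp
  qed
  have Atb: "transpose_mat Ap *\<^sub>v \<beta> \<in> carrier_vec p" using ApT b by simp
  have gc: "g \<in> carrier_vec p" using gB MB(2) Atb by simp
  then show "dim_vec g = p" by simp
  have "M *\<^sub>v g = transpose_mat Ap *\<^sub>v \<beta>"
    unfolding gB using MB M Atb by (simp flip: assoc_mult_mat_vec)
  moreover have "M *\<^sub>v g = transpose_mat Ap *\<^sub>v (Ap *\<^sub>v g) + Pp *\<^sub>v g"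
    unfolding M_def using Ap Pp gc by (simp add: add_mult_distrib_mat_vec[of _ p p])
  ultimately have eq: "transpose_mat Ap *\<^sub>v (Ap *\<^sub>v g) + Pp *\<^sub>v g = transpose_mat Ap *\<^sub>v \<beta>" by simp
  fix i assume i: "i < p"
  have "(transpose_mat Ap *\<^sub>v (Ap *\<^sub>v g)) $ i + (Pp *\<^sub>v g) $ i = (transpose_mat Ap *\<^sub>v \<beta>) $ i"
    using arg_cong[OF eq, of "\<lambda>v. v $ i"] i Ap Pp by simp
  moreover have "(Pp *\<^sub>v g) $ i = (\<Sum>j<p. Psi i j * g $ j)"
    using i gc by (simp add: Pp_def Psi_p_def scalar_prod_def row_def atLeast0LessThan)
  moreover have "(transpose_mat Ap *\<^sub>v \<beta>) $ i = (\<Sum>l<m. A l i * \<beta> $ l)"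
    using i b by (simp add: Ap_def A_p_def scalar_prod_def row_def col_def atLeast0LessThan)
  moreover have "(Ap *\<^sub>v g) $ l = (\<Sum>j<p. A l j * g $ j)" if "l < m" for l
    using that gc by (simp add: Ap_def A_p_def scalar_prod_def row_def atLeast0LessThan)
  moreover have "(transpose_mat Ap *\<^sub>v (Ap *\<^sub>v g)) $ i = (\<Sum>l<m. A l i * (Ap *\<^sub>v g) $ l)"
    using i by (simp add: Ap_def A_p_def scalar_prod_def row_def col_def atLeast0LessThan)
  ultimately show "(\<Sum>j<p. Psi i j * g $ j) = (\<Sum>l<m. A l i * (\<beta> $ l - (\<Sum>j<p. A l j * g $ j)))"
    by (simp add: right_diff_distrib sum_subtractf)
qed


theorem proposition1:
  fixes m :: nat and \<beta> :: "real vec"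
    and A :: "nat \<Rightarrow> nat \<Rightarrow> real" and Psi :: "nat \<Rightarrow> nat \<Rightarrow> real"
    and k K :: real
  assumes "m \<ge> 1"
    and "\<beta> \<in> carrier_vec m"
    and "\<forall>p. pos_def_mat (Psi_p Psi p)"
    and "0 < k" and "k \<le> K"
    and "\<forall>p e. eigenvalue (Psi_p Psi p) e \<longrightarrow> k \<le> e \<and> e \<le> K"
    and "\<exists>L \<in> carrier_mat m m. vec_space.rank m L = m \<and>
           (\<forall>i < m. \<forall>j < m.
              (\<lambda>p. (1 / real p) * (A_p m A p * transpose_mat (A_p m A p)) $$ (i, j))
                \<longlonglongrightarrow> L $$ (i, j))"
  shows "(\<lambda>p. l1_norm_vec (gamma0 (A_p m A p) (Psi_p Psi p) \<beta>)) \<in> O(\<lambda>p. 1)"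
proof -
  note m = assms(1) and bc = assms(2) and pd = assms(3) and k = assms(4) and kK = assms(5)
    and evK = assms(6)
  obtain L where L: "L \<in> carrier_mat m m" "vec_space.rank m L = m"
    and lim: "\<forall>i < m. \<forall>j < m.
              (\<lambda>p. (1 / real p) * (A_p m A p * transpose_mat (A_p m A p)) $$ (i, j))
                \<longlonglongrightarrow> L $$ (i, j)"
    using assms(7) by blast
  obtain c where c: "c > 0"
    and ev: "eventually (\<lambda>p. \<forall>x. c * real p * nsq m x \<le> qf (DD A p) m x) sequentially"
    using L_lower[OF m L lim] by blast
  have sym: "\<And>i j. Psi i j = Psi j i" using psi_sym[OF pd] by blast
  define bb where "bb = nsq m (\<lambda>l. \<beta> $ l)"
  define Bd where "Bd = sqrt (K^2*bb/(c*k^2))"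
  have K0: "0 \<le> K" using k kK by simp
  show ?thesis
  proof (rule bigoI[where c = Bd])
    show "eventually (\<lambda>p. norm (l1_norm_vec (gamma0 (A_p m A p) (Psi_p Psi p) \<beta>)) \<le> Bd * norm (1::real)) at_top"
      using ev eventually_ge_at_top[of 1]
    proof eventually_elim
      case (elim p)
      define gv where "gv = gamma0 (A_p m A p) (Psi_p Psi p) \<beta>"
      define g where "g i = gv $ i" for i
      define w where "w l = \<beta> $ l - (\<Sum>j<p. A l j * g j)" for l
      define u where "u i = (\<Sum>j<p. Psi i j * g j)" for i
      define Q where "Q = qf Psi p g"
      have dg: "dim_vec gv = p" using gamma_key(1)[OF pd[rule_format] bc] by (simp add: gv_def)
      have key: "u i = (\<Sum>l<m. A l i * w l)" if "i < p" for i
        using gamma_key(2)[OF pd[rule_format] bc that] unfolding u_def w_def g_def gv_def by simp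
      have l1: "l1_norm_vec gv = (\<Sum>i<p. \<bar>g i\<bar>)" by (simp add: l1_norm_vec_def dg g_def)
      have Qdot: "Q = dot p g u"
        unfolding Q_def qf_def dot_def u_def sum_distrib_left by (intro sum.cong refl) (simp add: algebra_simps)
      have E1: "Q = dot m w (\<lambda>l. \<beta> $ l) - nsq m w"
      proof -
        have "Q = (\<Sum>i<p. g i * (\<Sum>l<m. A l i * w l))" unfolding Qdot dot_def using key by simp
        also have "\<dots> = (\<Sum>i<p. \<Sum>l<m. w l * (A l i * g i))"
          unfolding sum_distrib_left by (intro sum.cong refl) (simp add: algebra_simps)
        also have "\<dots> = (\<Sum>l<m. \<Sum>i<p. w l * (A l i * g i))" by (rule sum.swap)
        also have "\<dots> = (\<Sum>l<m. w l * (\<beta> $ l - w l))"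
          unfolding sum_distrib_left[symmetric] w_def by simp
        also have "\<dots> = dot m w (\<lambda>l. \<beta> $ l) - nsq m w"
          unfolding dot_def nsq_def sum_subtractf[symmetric] by (intro sum.cong refl) (simp add: algebra_simps power2_eq_square)
        finally show ?thesis .
      qed
      have E2: "nsq p u = qf (DD A p) m w"
        unfolding qf_DD nsq_def using key by simp
      have E3: "bf Psi p g u = nsq p u"
      proof -
        have "bf Psi p g u = (\<Sum>j<p. \<Sum>i<p. g i * Psi i j * u j)" unfolding bf_def by (rule sum.swap)
        also have "\<dots> = (\<Sum>j<p. u j * u j)"
          unfolding u_def sum_distrib_right sum_distrib_left
          by (intro sum.cong refl) (simp add: sym[of _ j for j] algebra_simps)
        finally show ?thesis by (simp add: nsq_def power2_eq_square)
      qed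
      have psd: "\<And>x. 0 \<le> qf Psi p x"
        using psi_bounds(1)[OF pd evK, of p] k nsq_nonneg by (meson less_imp_le mult_nonneg_nonneg order_trans)
      have cs: "(bf Psi p g u)^2 \<le> Q * qf Psi p u" unfolding Q_def by (rule psd_cs) (use sym psd in auto)
      have Q0: "0 \<le> Q" unfolding Q_def by (rule psd)
      have "Q * qf Psi p u \<le> Q * (K * nsq p u)" using psi_bounds(2)[OF pd evK, of p u] Q0 k
        by (intro mult_left_mono) auto
      with cs E3 have U1: "(nsq p u)^2 \<le> K * Q * nsq p u" by (simp add: algebra_simps)
      have "Q \<le> dot m w (\<lambda>l. \<beta> $ l)" using E1 nsq_nonneg[of m w] by simp
      then have "Q^2 \<le> (dot m w (\<lambda>l. \<beta> $ l))^2" using Q0 by (intro power_mono) auto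
      also have "\<dots> \<le> nsq m w * bb" unfolding bb_def by (rule dot_cs)
      finally have Qab: "Q^2 \<le> nsq m w * bb" .
      have cPa: "c * real p * nsq m w \<le> nsq p u" using elim(1) E2 by simp
      have kG: "k * nsq p g \<le> Q" unfolding Q_def using psi_bounds(1)[OF pd evK, of p g] k by simp
      have QGU: "Q^2 \<le> nsq p g * nsq p u" unfolding Qdot by (rule dot_cs)
      have l1b: "(\<Sum>i<p. \<bar>g i\<bar>)^2 \<le> real p * nsq p g" by (rule abs_sum_sq)
      have p0: "0 < real p" using elim(2) by simp
      have b0: "0 \<le> bb" unfolding bb_def by (rule nsq_nonneg)
      have "(\<Sum>i<p. \<bar>g i\<bar>) \<le> Bd" unfolding Bd_def
        by (rule numerics[OF U1 nsq_nonneg Q0 Qab cPa kG QGU l1b k c p0 K0 nsq_nonneg b0 nsq_nonneg])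
      moreover have "0 \<le> (\<Sum>i<p. \<bar>g i\<bar>)" by (intro sum_nonneg) auto
      ultimately show ?case using l1 unfolding gv_def by simp
    qed
  qed
qed

end
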